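(* Let $\mathbf{Z}=\{Z_{\mathbf{u}}\}_{\mathbf{u}\in\mathbb{R}^2}$ be a max-stable random field, let $\mathbf{x}=\{\mathbf{x}_1,\ldots,\mathbf{x}_k\}$ and $\mathbf{y}=\{\mathbf{y}_1,\ldots,\mathbf{y}_s\}$ be disjoint sets of locations in $\mathbb{R}^2$, and let $F_{\mathbf{x}_i}$, $F_{\mathbf{y}_j}$ denote the marginal distribution functions of $Z_{\mathbf{x}_i}$, $Z_{\mathbf{y}_j}$. Let $(Z^{(t)}_{\mathbf{x}_1},\ldots,Z^{(t)}_{\mathbf{x}_k},Z^{(t)}_{\mathbf{y}_1},\ldots,Z^{(t)}_{\mathbf{y}_s})$, $t=1,\ldots,T$, be independent replications of $(Z_{\mathbf{x}_1},\ldots,Z_{\mathbf{x}_k},Z_{\mathbf{y}_1},\ldots,Z_{\mathbf{y}_s})$, and let $\widehat{F}_{\mathbf{w}}(u)=\frac1T\sum_{t=1}^T\mathbf{1}_{\{Z^{(t)}_{\mathbf{w}}\le u\}}$ be the empirical distribution function at location $\mathbf{w}$. For $\alpha,\beta>0$ define $$\widehat{\widehat{\nu}}^{\alpha,\beta}(\mathbf{x},\mathbf{y})=\frac{1}{2T}\sum_{t=1}^T\left|\bigvee_{i=1}^k\widehat{F}^{\alpha}_{\mathbf{x}_i}\big(Z^{(t)}_{\mathbf{x}_i}\big)-\bigvee_{j=1}^s\widehat{F}^{\beta}_{\mathbf{y}_j}\big(Z^{(t)}_{\mathbf{y}_j}\big)\right|.$$ Then, as $T\to\infty$, $$\widehat{\widehat{\nu}}^{\alpha,\beta}(\mathbf{x},\mathbf{y})\to\frac12E\left|\bigvee_{i=1}^kF^{\alpha}_{\mathbf{x}_i}(Z_{\mathbf{x}_i})-\bigvee_{j=1}^sF^{\beta}_{\mathbf{y}_j}(Z_{\mathbf{y}_j})\right|\quad\text{almost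 surely}.$$
   Context: The limit equals the generalized madogram $\nu^{\alpha,\beta}(\mathbf{x},\mathbf{y})=\tfrac12E|F^{\alpha}(M(\mathbf{x}))-F^{\beta}(M(\mathbf{y}))|$ of the field transformed to unit Fréchet margins $F(z)=\exp(-z^{-1})$, where $M(\mathbf{x})$, $M(\mathbf{y})$ are the maxima over the regions. *)

theory Defs
  imports "HOL-Probability.Probability"
begin

text \<open>Max-stable random field (indexed by locations of type 'l), defined through finite-dimensional
  distribution functions: for each n \<ge> 1 there are normings a_n > 0, b_n such that the normalised
  pointwise maximum of n independent copies has the same finite-dimensional distributions as the field,
  i.e. P(Z_u \<le> a_n(u) z_u + b_n(u) for all u in U)^n = P(Z_u \<le> z_u for all u in U).\<close>
definition max_stable :: "'a measure \<Rightarrow> ('a \<Rightarrow> 'l \<Rightarrow> real) \<Rightarrow> bool" where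
  "max_stable M Z \<longleftrightarrow>
     (\<forall>u. (\<lambda>\<omega>. Z \<omega> u) \<in> borel_measurable M) \<and>
     (\<forall>u. \<not> (\<exists>c. AE \<omega> in M. Z \<omega> u = c)) \<and>
     (\<forall>n::nat. n \<ge> 1 \<longrightarrow> (\<exists>a b :: 'l \<Rightarrow> real. (\<forall>u. a u > 0) \<and>
        (\<forall>U z. finite U \<longrightarrow>
           measure M {\<omega> \<in> space M. \<forall>u\<in>U. Z \<omega> u \<le> a u * z u + b u} ^ n
           = measure M {\<omega> \<in> space M. \<forall>u\<in>U. Z \<omega> u \<le> z u})))"

definition marg_cdf :: "'a measure \<Rightarrow> ('a \<Rightarrow> 'l \<Rightarrow> real) \<Rightarrow> 'l \<Rightarrow> real \<Rightarrow> real" where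
  "marg_cdf M Z w u = measure M {\<omega> \<in> space M. Z \<omega> w \<le> u}"

definition emp_cdf :: "(nat \<Rightarrow> 'a \<Rightarrow> 'l \<Rightarrow> real) \<Rightarrow> nat \<Rightarrow> 'l \<Rightarrow> 'a \<Rightarrow> real \<Rightarrow> real" where
  "emp_cdf Zr T w \<omega> u = (1 / real T) * (\<Sum>t\<in>{1..T}. if Zr t \<omega> w \<le> u then 1 else 0)"

definition madogram_est ::
  "(nat \<Rightarrow> 'a \<Rightarrow> 'l \<Rightarrow> real) \<Rightarrow> real \<Rightarrow> real \<Rightarrow> 'l set \<Rightarrow> 'l set \<Rightarrow> nat \<Rightarrow> 'a \<Rightarrow> real" where
  "madogram_est Zr \<alpha> \<beta> X Y T \<omega> =
     (1 / (2 * real T)) * (\<Sum>t\<in>{1..T}.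
        \<bar>(MAX i\<in>X. emp_cdf Zr T i \<omega> (Zr t \<omega> i) powr \<alpha>)
         - (MAX j\<in>Y. emp_cdf Zr T j \<omega> (Zr t \<omega> j) powr \<beta>)\<bar>)"

end

theory Submission
  imports Defs
begin



lemma (in prob_space) slln01:
  fixes X :: "nat \<Rightarrow> 'a \<Rightarrow> real"
  assumes indep: "indep_vars (\<lambda>_. borel) X {1..}"
    and meas: "\<And>t. t \<ge> 1 \<Longrightarrow> X t \<in> borel_measurable M"
    and bnd: "\<And>t \<omega>. t \<ge> 1 \<Longrightarrow> \<omega> \<in> space M \<Longrightarrow> 0 \<le> X t \<omega> \<and> X t \<omega> \<le> 1"
    and exp: "\<And>t. t \<ge> 1 \<Longrightarrow> expectation (X t) = \<mu>"
  shows "AE \<omega> in M. (\<lambda>T. (\<Sum>t\<in>{1..T}. X t \<omega>) / real T) \<longlonglongrightarrow> \<mu>"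
proof -
  have key: "AE \<omega> in M. eventually (\<lambda>n. \<bar>(\<Sum>t\<in>{1..n}. X t \<omega>) / real n - \<mu>\<bar> < e) sequentially"
    if e: "e > 0" for e :: real
  proof -
    define A where "A n = {\<omega> \<in> space M. real n * e \<le> \<bar>(\<Sum>t\<in>{1..n}. X t \<omega>) - real n * \<mu>\<bar>}" for n
    have Am[measurable]: "A n \<in> sets M" for n
    proof -
      have "(\<lambda>\<omega>. (\<Sum>t\<in>{1..n}. X t \<omega>)) \<in> borel_measurable M"
        using meas by (intro borel_measurable_sum) auto
      then show ?thesis unfolding A_def by measurable
    qed
    have Ab: "measure M (A n) \<le> 2 * exp (-2 * e\<^sup>2) ^ n" if n: "n \<ge> 1" for n
    proof -
      interpret H: Hoeffding_ineq M "{1..n}" X "\<lambda>_. 0" "\<lambda>_. 1" "\<Sum>i\<in>{1..n}. expectation (X i)"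
      proof (unfold_locales)
        show "indep_vars (\<lambda>_. borel) X {1..n}"
          by (rule indep_vars_subset[OF indep]) auto
        show "AE x in M. X i x \<in> {0..1}" if "i \<in> {1..n}" for i
          using bnd that by (intro AE_I2) auto
      qed auto
      have s: "(\<Sum>i\<in>{1..n}. expectation (X i)) = real n * \<mu>" using exp by simp
      have "measure M (A n) \<le> 2 * exp (- 2 * (real n * e)\<^sup>2 / (\<Sum>i\<in>{1..n}. (1 - 0)\<^sup>2))"
        using H.Hoeffding_ineq_abs_ge[of "real n * e"] e n unfolding A_def s by auto
      also have "\<dots> = 2 * exp (-2 * e\<^sup>2) ^ n"
        using n by (simp add: power2_eq_square exp_of_nat_mult[symmetric] field_simps)
      finally show ?thesis .
    qed
    have "summable (\<lambda>n. measure M (A n))"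
    proof (rule summable_comparison_test')
      show "summable (\<lambda>n. 2 * exp (-2 * e\<^sup>2) ^ n)"
        using e by (intro summable_mult summable_geometric) auto
      show "norm (measure M (A n)) \<le> 2 * exp (-2 * e\<^sup>2) ^ n" if "n \<ge> 1" for n
        using Ab that by simp
    qed
    then have "AE x in M. eventually (\<lambda>n. x \<in> space M - A n) sequentially"
      by (intro borel_cantelli_AE1) (auto simp: less_top[symmetric] emeasure_finite)
    then show ?thesis
    proof (rule AE_mp, intro AE_I2 impI)
      fix \<omega> assume "\<omega> \<in> space M" "eventually (\<lambda>n. \<omega> \<in> space M - A n) sequentially"
      then have "eventually (\<lambda>n. n \<ge> 1 \<and> \<omega> \<in> space M - A n) sequentially"
        by (simp add: eventually_conj_iff eventually_ge_at_top)
      then show "eventually (\<lambda>n. \<bar>(\<Sum>t\<in>{1..n}. X t \<omega>) / real n - \<mu>\<bar> < e) sequentially"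
      proof (rule eventually_mono)
        fix n assume n: "1 \<le> n \<and> \<omega> \<in> space M - A n"
        then have "\<bar>(\<Sum>t\<in>{1..n}. X t \<omega>) - real n * \<mu>\<bar> < real n * e"
          unfolding A_def using \<open>\<omega> \<in> space M\<close> by auto
        moreover have "(\<Sum>t\<in>{1..n}. X t \<omega>) / real n - \<mu> = ((\<Sum>t\<in>{1..n}. X t \<omega>) - real n * \<mu>) / real n"
          using n by (simp add: field_simps)
        ultimately show "\<bar>(\<Sum>t\<in>{1..n}. X t \<omega>) / real n - \<mu>\<bar> < e"
          using n by (simp add: abs_div pos_divide_less_eq mult.commute)
      qed
    qed
  qed
  have "AE \<omega> in M. \<forall>k::nat. eventually (\<lambda>n. \<bar>(\<Sum>t\<in>{1..n}. X t \<omega>) / real n - \<mu>\<bar> < 1 / Suc k) sequentially"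
    by (subst AE_all_countable) (intro allI key, simp)
  then show ?thesis
  proof (rule AE_mp, intro AE_I2 impI)
    fix \<omega> assume H: "\<forall>k::nat. eventually (\<lambda>n. \<bar>(\<Sum>t\<in>{1..n}. X t \<omega>) / real n - \<mu>\<bar> < 1 / Suc k) sequentially"
    show "(\<lambda>T. (\<Sum>t\<in>{1..T}. X t \<omega>) / real T) \<longlonglongrightarrow> \<mu>"
    proof (rule tendstoI)
      fix e :: real assume "e > 0"
      then obtain k :: nat where k: "1 / Suc k < e"
        by (metis nat_approx_posE)
      show "eventually (\<lambda>T. dist ((\<Sum>t\<in>{1..T}. X t \<omega>) / real T) \<mu> < e) sequentially"
        using H[rule_format, of k] by (rule eventually_mono) (use k in \<open>simp add: dist_real_def\<close>)
    qed
  qed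
qed



lemma gc_step:
  fixes F Fh Gh L :: "real \<Rightarrow> real" and qq :: "nat \<Rightarrow> real" and m :: nat
  assumes m: "m \<ge> 1"
    and Fmono: "\<And>x y. x \<le> y \<Longrightarrow> F x \<le> F y" and Fb: "\<And>x. 0 \<le> F x \<and> F x \<le> 1"
    and Fhmono: "\<And>x y. x \<le> y \<Longrightarrow> Fh x \<le> Fh y" and Fhb: "\<And>x. 0 \<le> Fh x \<and> Fh x \<le> 1"
    and FG: "\<And>x y. x < y \<Longrightarrow> Fh x \<le> Gh y"
    and qa: "\<And>j. 1 \<le> j \<Longrightarrow> j \<le> m - 1 \<Longrightarrow> F (qq j) \<ge> real j / real m"
    and qb: "\<And>j u. 1 \<le> j \<Longrightarrow> j \<le> m - 1 \<Longrightarrow> u < qq j \<Longrightarrow> F u < real j / real m"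
    and qc: "\<And>j. 1 \<le> j \<Longrightarrow> j \<le> m - 1 \<Longrightarrow> L (qq j) \<le> real j / real m"
    and ca: "\<And>j. 1 \<le> j \<Longrightarrow> j \<le> m - 1 \<Longrightarrow> \<bar>Fh (qq j) - F (qq j)\<bar> \<le> 1 / real m"
    and cb: "\<And>j. 1 \<le> j \<Longrightarrow> j \<le> m - 1 \<Longrightarrow> Gh (qq j) \<le> L (qq j) + 1 / real m"
  shows "\<bar>Fh u - F u\<bar> \<le> 2 / real m"
proof -
  define J where "J = {j\<in>{1..m-1}. qq j \<le> u}"
  obtain j where j1: "j \<le> m - 1" and j2: "1 \<le> j \<Longrightarrow> qq j \<le> u"
    and j3: "j + 1 \<le> m - 1 \<Longrightarrow> u < qq (j+1)"
  proof (cases "J = {}")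
    case True
    show ?thesis
    proof (rule that[of 0])
      show "u < qq (0 + 1)" if "0 + 1 \<le> m - 1"
      proof (rule ccontr)
        assume "\<not> u < qq (0 + 1)"
        then have "1 \<in> J" using that unfolding J_def by auto
        then show False using True by blast
      qed
    qed auto
  next
    case False
    have fin: "finite J" unfolding J_def by auto
    obtain k where kJ: "k \<in> J" and kmax: "\<And>i. i \<in> J \<Longrightarrow> i \<le> k"
      using Max_in[OF fin False] Max_ge[OF fin] by blast
    have k1: "1 \<le> k \<and> k \<le> m - 1 \<and> qq k \<le> u" using kJ unfolding J_def by simp
    show ?thesis
    proof (rule that[of k])
      show "k \<le> m - 1" using k1 by blast
      show "qq k \<le> u" using k1 by blast
      show "u < qq (k + 1)" if "k + 1 \<le> m - 1"
      proof (rule ccontr)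
        assume "\<not> u < qq (k + 1)"
        then have "k + 1 \<in> J" using that unfolding J_def by simp
        then have "k + 1 \<le> k" using kmax by blast
        then show False by simp
      qed
    qed
  qed
  have mpos: "real m > 0" using m by simp
  have two: "2 / real m = 2 * (1 / real m)" by simp
  have up: "Fh u \<le> F u + 2 / real m"
  proof -
    have lowF: "F u \<ge> real j / real m"
    proof (cases "j \<ge> 1")
      case True then show ?thesis using qa[OF True j1] Fmono[OF j2[OF True]] by linarith
    next
      case False then have "j = 0" by simp then show ?thesis using Fb[of u] by simp
    qed
    show ?thesis
    proof (cases "j + 1 \<le> m - 1")
      case True
      have "Fh u \<le> Gh (qq (j+1))" using FG[OF j3[OF True]] .
      also have "\<dots> \<le> real (j+1) / real m + 1 / real m"
      proof -
        have "Gh (qq (j+1)) \<le> L (qq (j+1)) + 1 / real m" by (rule cb[OF le_add2 True])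
        moreover have "L (qq (j+1)) \<le> real (j+1) / real m" by (rule qc[OF le_add2 True])
        ultimately show ?thesis by linarith
      qed
      also have "\<dots> = real j / real m + 2 / real m" using mpos by (simp add: add_divide_distrib)
      finally show ?thesis using lowF by linarith
    next
      case False
      then have "j + 1 = m" using j1 m by linarith
      then have "real (j + 1) = real m" by (rule arg_cong)
      then have "real j + 1 = real m" by simp
      then have "real j = real m - 1" by linarith
      then have "real j / real m = 1 - 1 / real m" using mpos by (simp add: diff_divide_distrib)
      moreover have "1 / real m \<ge> 0" using mpos by simp
      ultimately show ?thesis using lowF Fhb[of u] two by linarith
    qed
  qed
  have lo: "F u \<le> Fh u + 2 / real m"
  proof -
    have upF: "F u \<le> real (j+1) / real m"
    proof (cases "j + 1 \<le> m - 1")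
      case True then show ?thesis using qb[OF _ True j3[OF True]] by simp
    next
      case False
      then have "j + 1 = m" using j1 m by auto
      then show ?thesis using Fb[of u] mpos by simp
    qed
    show ?thesis
    proof (cases "j \<ge> 1")
      case True
      have "Fh u \<ge> Fh (qq j)" using Fhmono[OF j2[OF True]] .
      moreover have "Fh (qq j) \<ge> real j / real m - 1 / real m"
        using ca[OF True j1] qa[OF True j1] by linarith
      moreover have "real (j+1) / real m = real j / real m + 1 / real m"
        using mpos by (simp add: field_simps)
      moreover have "1 / real m \<ge> 0" using mpos by simp
      ultimately show ?thesis using upF two by linarith
    next
      case False
      then have "j = 0" by simp
      then have "F u \<le> 1 / real m" using upF by simp
      moreover have "1 / real m \<ge> 0" using mpos by simp
      ultimately show ?thesis using Fhb[of u] two by linarith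
    qed
  qed
  show ?thesis using up lo by linarith
qed



definition qnt :: "real measure \<Rightarrow> nat \<Rightarrow> nat \<Rightarrow> real" where
  "qnt N m j = Inf {u. real j / real m \<le> cdf N u}"

lemma (in real_distribution) quantile_props:
  assumes p0: "0 < p" and p1: "p < 1"
  shows "p \<le> cdf M (Inf {u. p \<le> cdf M u})"
    and "\<And>u. u < Inf {u. p \<le> cdf M u} \<Longrightarrow> cdf M u < p"
    and "measure M {..<Inf {u. p \<le> cdf M u}} \<le> p"
proof -
  define S where "S = {u. p \<le> cdf M u}"
  have "eventually (\<lambda>u. cdf M u > p) at_top"
    using order_tendstoD(1)[OF cdf_lim_at_top_prob p1] .
  then obtain u0 where "\<And>u. u \<ge> u0 \<Longrightarrow> cdf M u > p" by (auto simp: eventually_at_top_linorder)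
  then have Sne: "S \<noteq> {}" unfolding S_def by (metis empty_iff less_imp_le mem_Collect_eq order_refl)
  have "eventually (\<lambda>u. cdf M u < p) at_bot"
    using order_tendstoD(2)[OF cdf_lim_at_bot p0] .
  then obtain b where b: "\<And>u. u \<le> b \<Longrightarrow> cdf M u < p" by (auto simp: eventually_at_bot_linorder)
  have Sbdd: "bdd_below S"
  proof (rule bdd_belowI[of _ b])
    fix s assume "s \<in> S"
    then show "b \<le> s" using b[of s] unfolding S_def by force
  qed
  show lt: "cdf M u < p" if "u < Inf {u. p \<le> cdf M u}" for u
  proof (rule ccontr)
    assume "\<not> cdf M u < p"
    then have "u \<in> S" unfolding S_def by simp
    then have "Inf S \<le> u" using cInf_lower[OF _ Sbdd] by blast
    then show False using that unfolding S_def by simp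
  qed
  show "p \<le> cdf M (Inf {u. p \<le> cdf M u})"
  proof (rule tendsto_lowerbound)
    have "continuous (at_right (Inf S)) (cdf M)" by (rule cdf_is_right_cont)
    then show "(cdf M \<longlongrightarrow> cdf M (Inf {u. p \<le> cdf M u})) (at_right (Inf {u. p \<le> cdf M u}))"
      unfolding S_def by (simp add: continuous_within)
    show "\<forall>\<^sub>F x in at_right (Inf {u. p \<le> cdf M u}). p \<le> cdf M x"
      using eventually_at_right_less
    proof (rule eventually_mono)
      fix x assume "Inf {u. p \<le> cdf M u} < x"
      then obtain s where "s \<in> S" "s < x" using cInf_less_iff[OF Sne Sbdd] unfolding S_def by auto
      then show "p \<le> cdf M x" using cdf_nondecreasing[of s x] unfolding S_def by auto
    qed
  qed simp
  show "measure M {..<Inf {u. p \<le> cdf M u}} \<le> p"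
  proof (rule tendsto_upperbound)
    show "(cdf M \<longlongrightarrow> measure M {..<Inf {u. p \<le> cdf M u}}) (at_left (Inf {u. p \<le> cdf M u}))"
      by (rule cdf_at_left)
    show "\<forall>\<^sub>F x in at_left (Inf {u. p \<le> cdf M u}). cdf M x \<le> p"
    proof -
      have "\<forall>\<^sub>F x in at_left (Inf {u. p \<le> cdf M u}). x < Inf {u. p \<le> cdf M u}"
        by (simp add: eventually_at_filter)
      then show ?thesis by (rule eventually_mono) (use lt in force)
    qed
  qed simp
qed




lemma gc_unif:
  fixes N :: "real measure" and Fh Gh :: "nat \<Rightarrow> real \<Rightarrow> real" and e :: real
  assumes N: "real_distribution N"
    and Fhmono: "\<And>T x y. x \<le> y \<Longrightarrow> Fh T x \<le> Fh T y"
    and Fhb: "\<And>T x. 0 \<le> Fh T x \<and> Fh T x \<le> 1"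
    and FG: "\<And>T x y. x < y \<Longrightarrow> Fh T x \<le> Gh T y"
    and cF: "\<And>m j. (\<lambda>T. Fh T (qnt N m j)) \<longlonglongrightarrow> cdf N (qnt N m j)"
    and cG: "\<And>m j. (\<lambda>T. Gh T (qnt N m j)) \<longlonglongrightarrow> measure N {..<qnt N m j}"
    and e: "e > 0"
  shows "eventually (\<lambda>T. \<forall>u. \<bar>Fh T u - cdf N u\<bar> \<le> e) sequentially"
proof -
  interpret N: real_distribution N by (rule N)
  obtain m :: nat where m: "2 / e < real m" using reals_Archimedean2 by blast
  have mpos: "real m > 0" using m e by (smt (verit) divide_pos_pos)
  then have m1: "m \<ge> 1" by simp
  have me: "2 / real m \<le> e" using m e mpos by (simp add: field_simps)
  have ev: "eventually (\<lambda>T. \<forall>j\<in>{1..m-1}. \<bar>Fh T (qnt N m j) - cdf N (qnt N m j)\<bar> \<le> 1 / real m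
       \<and> Gh T (qnt N m j) \<le> measure N {..<qnt N m j} + 1 / real m) sequentially"
  proof (rule eventually_ball_finite, simp, intro ballI)
    fix j assume "j \<in> {1..m-1}"
    have d: "1 / real m > 0" using mpos by simp
    have "eventually (\<lambda>T. dist (Fh T (qnt N m j)) (cdf N (qnt N m j)) < 1 / real m) sequentially"
      using tendstoD[OF cF d] .
    moreover have "eventually (\<lambda>T. dist (Gh T (qnt N m j)) (measure N {..<qnt N m j}) < 1 / real m) sequentially"
      using tendstoD[OF cG d] .
    ultimately show "eventually (\<lambda>T. \<bar>Fh T (qnt N m j) - cdf N (qnt N m j)\<bar> \<le> 1 / real m
       \<and> Gh T (qnt N m j) \<le> measure N {..<qnt N m j} + 1 / real m) sequentially"
      by eventually_elim (auto simp: dist_real_def abs_less_iff)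
  qed
  show ?thesis using ev
  proof (rule eventually_mono, intro allI)
    fix T u
    assume H: "\<forall>j\<in>{1..m-1}. \<bar>Fh T (qnt N m j) - cdf N (qnt N m j)\<bar> \<le> 1 / real m
       \<and> Gh T (qnt N m j) \<le> measure N {..<qnt N m j} + 1 / real m"
    have qp: "0 < real j / real m" "real j / real m < 1" if "1 \<le> j" "j \<le> m - 1" for j
      using that mpos m1 by (auto simp: field_simps)
    have "\<bar>Fh T u - cdf N u\<bar> \<le> 2 / real m"
    proof (rule gc_step[where F = "cdf N" and L = "\<lambda>x. measure N {..<x}" and qq = "qnt N m" and Gh = "Gh T"])
      show "1 \<le> m" by (rule m1)
      show "cdf N x \<le> cdf N y" if "x \<le> y" for x y using N.cdf_nondecreasing[OF that] .
      show "0 \<le> cdf N x \<and> cdf N x \<le> 1" for x using N.cdf_nonneg N.cdf_bounded_prob by auto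
      show "Fh T x \<le> Fh T y" if "x \<le> y" for x y using Fhmono[OF that] .
      show "0 \<le> Fh T x \<and> Fh T x \<le> 1" for x using Fhb .
      show "Fh T x \<le> Gh T y" if "x < y" for x y using FG[OF that] .
      show "real j / real m \<le> cdf N (qnt N m j)" if "1 \<le> j" "j \<le> m - 1" for j
        unfolding qnt_def by (rule N.quantile_props(1)[OF qp[OF that]])
      show "cdf N v < real j / real m" if "1 \<le> j" "j \<le> m - 1" "v < qnt N m j" for j v
        using that(3) unfolding qnt_def by (rule N.quantile_props(2)[OF qp[OF that(1,2)]])
      show "measure N {..<qnt N m j} \<le> real j / real m" if "1 \<le> j" "j \<le> m - 1" for j
        unfolding qnt_def by (rule N.quantile_props(3)[OF qp[OF that]])
      show "\<bar>Fh T (qnt N m j) - cdf N (qnt N m j)\<bar> \<le> 1 / real m" if "1 \<le> j" "j \<le> m - 1" for j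
        using H that by auto
      show "Gh T (qnt N m j) \<le> measure N {..<qnt N m j} + 1 / real m" if "1 \<le> j" "j \<le> m - 1" for j
        using H that by auto
    qed
    then show "\<bar>Fh T u - cdf N u\<bar> \<le> e" using me by linarith
  qed
qed



lemma max_diff:
  fixes a b :: "'l \<Rightarrow> real"
  assumes "finite I" "I \<noteq> {}" "\<And>i. i \<in> I \<Longrightarrow> \<bar>a i - b i\<bar> \<le> e"
  shows "\<bar>(MAX i\<in>I. a i) - (MAX i\<in>I. b i)\<bar> \<le> e"
proof -
  obtain i where i: "i \<in> I" "(MAX i\<in>I. a i) = a i"
    using assms(1,2) by (metis (no_types, lifting) Max_in empty_is_image finite_imageI imageE)
  obtain k where k: "k \<in> I" "(MAX i\<in>I. b i) = b k"
    using assms(1,2) by (metis (no_types, lifting) Max_in empty_is_image finite_imageI imageE)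
  have "b i \<le> b k" using i(1) k assms(1) by (metis Max_ge finite_imageI imageI)
  moreover have "a k \<le> a i" using k(1) i assms(1) by (metis Max_ge finite_imageI imageI)
  ultimately show ?thesis using assms(3)[OF i(1)] assms(3)[OF k(1)] i k by linarith
qed

lemma powr_unif:
  fixes \<alpha> :: real assumes "\<alpha> > 0" "e > 0"
  shows "\<exists>d>0. \<forall>x y. x \<in> {0..1} \<longrightarrow> y \<in> {0..1} \<longrightarrow> \<bar>x - y\<bar> < d \<longrightarrow> \<bar>x powr \<alpha> - y powr \<alpha>\<bar> < e"
proof -
  have "continuous_on {0..1::real} (\<lambda>x. x powr \<alpha>)"
    by (rule continuous_on_powr') (use assms in \<open>auto intro: continuous_intros\<close>)
  then have "uniformly_continuous_on {0..1::real} (\<lambda>x. x powr \<alpha>)"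
    by (rule compact_uniformly_continuous) simp
  then obtain d where "d > 0" "\<forall>x\<in>{0..1}. \<forall>x'\<in>{0..1}. dist x' x < d \<longrightarrow> dist (x' powr \<alpha>) (x powr \<alpha>) < e"
    using assms(2) unfolding uniformly_continuous_on_def by blast
  then show ?thesis by (auto simp: dist_real_def)
qed

lemma final_det:
  fixes E :: "'l \<Rightarrow> nat \<Rightarrow> real \<Rightarrow> real" and F :: "'l \<Rightarrow> real \<Rightarrow> real" and z :: "nat \<Rightarrow> 'l \<Rightarrow> real"
  assumes X: "finite X" "X \<noteq> {}" and Y: "finite Y" "Y \<noteq> {}"
    and ab: "\<alpha> > 0" "\<beta> > 0"
    and Eb: "\<And>w T u. 0 \<le> E w T u \<and> E w T u \<le> 1"
    and Fb: "\<And>w u. 0 \<le> F w u \<and> F w u \<le> 1"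
    and unif: "\<And>w e. w \<in> X \<union> Y \<Longrightarrow> e > 0 \<Longrightarrow> eventually (\<lambda>T. \<forall>u. \<bar>E w T u - F w u\<bar> \<le> e) sequentially"
    and slln: "(\<lambda>T. (\<Sum>t\<in>{1..T}. \<bar>(MAX i\<in>X. F i (z t i) powr \<alpha>) - (MAX j\<in>Y. F j (z t j) powr \<beta>)\<bar>) / real T) \<longlonglongrightarrow> \<mu>"
  shows "(\<lambda>T. (1 / (2 * real T)) * (\<Sum>t\<in>{1..T}. \<bar>(MAX i\<in>X. E i T (z t i) powr \<alpha>) - (MAX j\<in>Y. E j T (z t j) powr \<beta>)\<bar>)) \<longlonglongrightarrow> (1/2) * \<mu>"
proof -
  define C where "C T = (1 / (2 * real T)) * (\<Sum>t\<in>{1..T}. \<bar>(MAX i\<in>X. F i (z t i) powr \<alpha>) - (MAX j\<in>Y. F j (z t j) powr \<beta>)\<bar>)" for T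
  define D where "D T = (1 / (2 * real T)) * (\<Sum>t\<in>{1..T}. \<bar>(MAX i\<in>X. E i T (z t i) powr \<alpha>) - (MAX j\<in>Y. E j T (z t j) powr \<beta>)\<bar>)" for T
  have C: "C \<longlonglongrightarrow> (1/2) * \<mu>"
  proof -
    have eq: "C = (\<lambda>T. (1/2) * ((\<Sum>t\<in>{1..T}. \<bar>(MAX i\<in>X. F i (z t i) powr \<alpha>) - (MAX j\<in>Y. F j (z t j) powr \<beta>)\<bar>) / real T))"
      unfolding C_def by (rule ext) simp
    show ?thesis unfolding eq by (intro tendsto_mult tendsto_const slln)
  qed
  have DC: "(\<lambda>T. D T - C T) \<longlonglongrightarrow> 0"
  proof (rule tendstoI)
    fix e :: real assume e: "e > 0"
    obtain d1 where d1: "d1 > 0" "\<And>x y. x \<in> {0..1} \<Longrightarrow> y \<in> {0..1} \<Longrightarrow> \<bar>x - y\<bar> < d1 \<Longrightarrow> \<bar>x powr \<alpha> - y powr \<alpha>\<bar> < e / 2"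
      using powr_unif[OF ab(1), of "e/2"] e by auto
    obtain d2 where d2: "d2 > 0" "\<And>x y. x \<in> {0..1} \<Longrightarrow> y \<in> {0..1} \<Longrightarrow> \<bar>x - y\<bar> < d2 \<Longrightarrow> \<bar>x powr \<beta> - y powr \<beta>\<bar> < e / 2"
      using powr_unif[OF ab(2), of "e/2"] e by auto
    define d where "d = min d1 d2 / 2"
    have d: "d > 0" "d < d1" "d < d2" using d1 d2 unfolding d_def by auto
    have "eventually (\<lambda>T. \<forall>w\<in>X \<union> Y. \<forall>u. \<bar>E w T u - F w u\<bar> \<le> d) sequentially"
      using X Y unif d(1) by (intro eventually_ball_finite) auto
    then have "eventually (\<lambda>T. T \<ge> 1 \<and> (\<forall>w\<in>X \<union> Y. \<forall>u. \<bar>E w T u - F w u\<bar> \<le> d)) sequentially"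
      by (simp add: eventually_conj_iff eventually_ge_at_top)
    then show "eventually (\<lambda>T. dist (D T - C T) 0 < e) sequentially"
    proof (rule eventually_mono)
      fix T :: nat assume H: "T \<ge> 1 \<and> (\<forall>w\<in>X \<union> Y. \<forall>u. \<bar>E w T u - F w u\<bar> \<le> d)"
      have trm: "\<bar>\<bar>(MAX i\<in>X. E i T (z t i) powr \<alpha>) - (MAX j\<in>Y. E j T (z t j) powr \<beta>)\<bar>
          - \<bar>(MAX i\<in>X. F i (z t i) powr \<alpha>) - (MAX j\<in>Y. F j (z t j) powr \<beta>)\<bar>\<bar> \<le> e / 2 + e / 2" for t
      proof -
        have "\<bar>(MAX i\<in>X. E i T (z t i) powr \<alpha>) - (MAX i\<in>X. F i (z t i) powr \<alpha>)\<bar> \<le> e / 2"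
        proof (rule max_diff[OF X])
          fix i assume "i \<in> X"
          then have "\<bar>E i T (z t i) - F i (z t i)\<bar> \<le> d" using H by blast
          then have "\<bar>E i T (z t i) - F i (z t i)\<bar> < d1" using d by linarith
          then show "\<bar>E i T (z t i) powr \<alpha> - F i (z t i) powr \<alpha>\<bar> \<le> e / 2"
            using d1(2)[of "E i T (z t i)" "F i (z t i)"] Eb Fb by fastforce
        qed
        moreover have "\<bar>(MAX j\<in>Y. E j T (z t j) powr \<beta>) - (MAX j\<in>Y. F j (z t j) powr \<beta>)\<bar> \<le> e / 2"
        proof (rule max_diff[OF Y])
          fix i assume "i \<in> Y"
          then have "\<bar>E i T (z t i) - F i (z t i)\<bar> \<le> d" using H by blast
          then have "\<bar>E i T (z t i) - F i (z t i)\<bar> < d2" using d by linarith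
          then show "\<bar>E i T (z t i) powr \<beta> - F i (z t i) powr \<beta>\<bar> \<le> e / 2"
            using d2(2)[of "E i T (z t i)" "F i (z t i)"] Eb Fb by fastforce
        qed
        ultimately show ?thesis by linarith
      qed
      have "\<bar>D T - C T\<bar> = (1 / (2 * real T)) * \<bar>\<Sum>t\<in>{1..T}. (\<bar>(MAX i\<in>X. E i T (z t i) powr \<alpha>) - (MAX j\<in>Y. E j T (z t j) powr \<beta>)\<bar>
          - \<bar>(MAX i\<in>X. F i (z t i) powr \<alpha>) - (MAX j\<in>Y. F j (z t j) powr \<beta>)\<bar>)\<bar>"
        unfolding D_def C_def by (simp add: sum_subtractf right_diff_distrib[symmetric] abs_mult) (simp add: diff_divide_distrib[symmetric])
      also have "\<dots> \<le> (1 / (2 * real T)) * (\<Sum>t\<in>{1..T}. (e / 2 + e / 2))"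
        by (intro mult_left_mono order.trans[OF sum_abs] sum_mono trm) auto
      also have "\<dots> = e / 2" using H by (simp add: field_simps)
      also have "\<dots> < e" using e by simp
      finally show "dist (D T - C T) 0 < e" by (simp add: dist_real_def)
    qed
  qed
  have "(\<lambda>T. C T + (D T - C T)) \<longlonglongrightarrow> (1/2) * \<mu> + 0" by (rule tendsto_add[OF C DC])
  then show ?thesis unfolding D_def by simp
qed




lemma (in prob_space) slln_vec:
  fixes V :: "nat \<Rightarrow> 'a \<Rightarrow> 'b" and W :: "'a \<Rightarrow> 'b" and P :: "'b measure" and g :: "'b \<Rightarrow> real"
  assumes indep: "indep_vars (\<lambda>_. P) V {1..}"
    and Vm: "\<And>t. V t \<in> M \<rightarrow>\<^sub>M P" and Wm: "W \<in> M \<rightarrow>\<^sub>M P"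
    and dist: "\<And>t. t \<ge> 1 \<Longrightarrow> distr M P (V t) = distr M P W"
    and gm: "g \<in> borel_measurable P" and gb: "\<And>v. v \<in> space P \<Longrightarrow> 0 \<le> g v \<and> g v \<le> 1"
  shows "AE \<omega> in M. (\<lambda>T. (\<Sum>t\<in>{1..T}. g (V t \<omega>)) / real T) \<longlonglongrightarrow> expectation (\<lambda>\<omega>. g (W \<omega>))"
proof (rule slln01)
  show "indep_vars (\<lambda>_. borel) (\<lambda>t \<omega>. g (V t \<omega>)) {1..}"
    using indep_vars_compose2[OF indep, of "\<lambda>_. g" "\<lambda>_. borel"] gm by simp
  show "(\<lambda>\<omega>. g (V t \<omega>)) \<in> borel_measurable M" for t
    using measurable_compose[OF Vm gm] .
  show "0 \<le> g (V t \<omega>) \<and> g (V t \<omega>) \<le> 1" if "\<omega> \<in> space M" for t \<omega>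
    using gb measurable_space[OF Vm that] by blast
  show "expectation (\<lambda>\<omega>. g (V t \<omega>)) = expectation (\<lambda>\<omega>. g (W \<omega>))" if "t \<ge> 1" for t
  proof -
    have "expectation (\<lambda>\<omega>. g (V t \<omega>)) = integral\<^sup>L (distr M P (V t)) g"
      by (rule integral_distr[symmetric, OF Vm gm])
    also have "\<dots> = integral\<^sup>L (distr M P W) g" using dist[OF that] by simp
    also have "\<dots> = expectation (\<lambda>\<omega>. g (W \<omega>))" by (rule integral_distr[OF Wm gm])
    finally show ?thesis .
  qed
qed

lemma (in prob_space) exp_ind_le:
  assumes [measurable]: "f \<in> borel_measurable M"
  shows "expectation (\<lambda>\<omega>. if f \<omega> \<le> c then 1 else 0) = prob {\<omega>\<in>space M. f \<omega> \<le> c}"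
proof -
  have "expectation (\<lambda>\<omega>. if f \<omega> \<le> c then 1 else 0) = expectation (indicator {\<omega>\<in>space M. f \<omega> \<le> c})"
    by (rule Bochner_Integration.integral_cong) (auto simp: indicator_def)
  also have "\<dots> = prob {\<omega>\<in>space M. f \<omega> \<le> c}" by (simp add: Int_absorb2)
  finally show ?thesis .
qed

lemma (in prob_space) exp_ind_less:
  assumes [measurable]: "f \<in> borel_measurable M"
  shows "expectation (\<lambda>\<omega>. if f \<omega> < c then 1 else 0) = prob {\<omega>\<in>space M. f \<omega> < c}"
proof -
  have "expectation (\<lambda>\<omega>. if f \<omega> < c then 1 else 0) = expectation (indicator {\<omega>\<in>space M. f \<omega> < c})"
    by (rule Bochner_Integration.integral_cong) (auto simp: indicator_def)
  also have "\<dots> = prob {\<omega>\<in>space M. f \<omega> < c}" by (simp add: Int_absorb2)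
  finally show ?thesis .
qed

lemma (in prob_space) distr_cdf:
  assumes [measurable]: "f \<in> borel_measurable M"
  shows "cdf (distr M borel f) c = prob {\<omega>\<in>space M. f \<omega> \<le> c}"
    and "measure (distr M borel f) {..<c} = prob {\<omega>\<in>space M. f \<omega> < c}"
proof -
  show "cdf (distr M borel f) c = prob {\<omega>\<in>space M. f \<omega> \<le> c}"
    unfolding cdf_def by (subst measure_distr) (auto intro: arg_cong[where f = prob])
  show "measure (distr M borel f) {..<c} = prob {\<omega>\<in>space M. f \<omega> < c}"
    by (subst measure_distr) (auto intro: arg_cong[where f = prob])
qed

lemma max_restrict:
  assumes "A \<subseteq> S"
  shows "(MAX i\<in>A. f (restrict g S i) i) = (MAX i\<in>A. f (g i) i)"
proof -
  have "(\<lambda>i. f (restrict g S i) i) ` A = (\<lambda>i. f (g i) i) ` A"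
    by (rule image_cong) (use assms in auto)
  then show ?thesis by simp
qed

lemma max01:
  fixes a :: "'l \<Rightarrow> real"
  assumes "finite A" "A \<noteq> {}" "\<And>i. i \<in> A \<Longrightarrow> 0 \<le> a i \<and> a i \<le> 1"
  shows "0 \<le> (MAX i\<in>A. a i) \<and> (MAX i\<in>A. a i) \<le> 1"
proof -
  obtain i where "i \<in> A" using assms(2) by blast
  then have "a i \<le> (MAX i\<in>A. a i)" using assms(1) by simp
  then have "0 \<le> (MAX i\<in>A. a i)" using assms(3)[OF \<open>i\<in>A\<close>] by linarith
  moreover have "(MAX i\<in>A. a i) \<le> 1" using assms by (simp add: Max_le_iff)
  ultimately show ?thesis by simp
qed




theorem mainTheorem4:
  fixes M :: "'a measure"
    and Z :: "'a \<Rightarrow> real^2 \<Rightarrow> real"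
    and Zr :: "nat \<Rightarrow> 'a \<Rightarrow> real^2 \<Rightarrow> real"
    and X Y :: "(real^2) set"
    and \<alpha> \<beta> :: real
  assumes "prob_space M"
    and "max_stable M Z"
    and "finite X" "X \<noteq> {}" "finite Y" "Y \<noteq> {}" "X \<inter> Y = {}"
    and "\<alpha> > 0" "\<beta> > 0"
    and "\<And>t u. u \<in> X \<union> Y \<Longrightarrow> (\<lambda>\<omega>. Zr t \<omega> u) \<in> borel_measurable M"
    and "prob_space.indep_vars M (\<lambda>_. PiM (X \<union> Y) (\<lambda>_. borel))
           (\<lambda>t \<omega>. restrict (Zr t \<omega>) (X \<union> Y)) {1..}"
    and "\<And>t. t \<ge> 1 \<Longrightarrow>
           distr M (PiM (X \<union> Y) (\<lambda>_. borel)) (\<lambda>\<omega>. restrict (Zr t \<omega>) (X \<union> Y))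
         = distr M (PiM (X \<union> Y) (\<lambda>_. borel)) (\<lambda>\<omega>. restrict (Z \<omega>) (X \<union> Y))"
  shows "AE \<omega> in M. (\<lambda>T. madogram_est Zr \<alpha> \<beta> X Y T \<omega>) \<longlonglongrightarrow>
           (1/2) * prob_space.expectation M (\<lambda>\<omega>.
              \<bar>(MAX i\<in>X. marg_cdf M Z i (Z \<omega> i) powr \<alpha>)
               - (MAX j\<in>Y. marg_cdf M Z j (Z \<omega> j) powr \<beta>)\<bar>)"
proof -
  interpret prob_space M by (rule assms(1))
  define S where "S = X \<union> Y"
  define P where "P = PiM S (\<lambda>_. borel::real measure)"
  have finS: "finite S" unfolding S_def using assms(3,5) by simp
  have Zm[measurable]: "\<And>u. (\<lambda>\<omega>. Z \<omega> u) \<in> borel_measurable M"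
    using assms(2) unfolding max_stable_def by blast
  have Zrm[measurable]: "\<And>t u. u \<in> S \<Longrightarrow> (\<lambda>\<omega>. Zr t \<omega> u) \<in> borel_measurable M"
    using assms(10) unfolding S_def by blast
  have Vm: "(\<lambda>\<omega>. restrict (Zr t \<omega>) S) \<in> M \<rightarrow>\<^sub>M P" for t
    unfolding P_def by (rule measurable_restrict) (rule Zrm)
  have Wm: "(\<lambda>\<omega>. restrict (Z \<omega>) S) \<in> M \<rightarrow>\<^sub>M P"
    unfolding P_def by (rule measurable_restrict) (rule Zm)
  have indep: "indep_vars (\<lambda>_. P) (\<lambda>t \<omega>. restrict (Zr t \<omega>) S) {1..}"
    using assms(11) unfolding P_def S_def .
  have dist: "\<And>t. t \<ge> 1 \<Longrightarrow> distr M P (\<lambda>\<omega>. restrict (Zr t \<omega>) S) = distr M P (\<lambda>\<omega>. restrict (Z \<omega>) S)"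
    using assms(12) unfolding P_def S_def .
  have comp[measurable]: "(\<lambda>v. v w) \<in> borel_measurable P" if "w \<in> S" for w
    unfolding P_def using measurable_component_singleton[OF that] .
  define N where "N w = distr M borel (\<lambda>\<omega>. Z \<omega> w)" for w
  have Nrd: "real_distribution (N w)" for w unfolding N_def by simp
  have cdfN: "cdf (N w) c = marg_cdf M Z w c" for w c
    unfolding N_def marg_cdf_def by (rule distr_cdf(1)) (rule Zm)
  have ltN: "measure (N w) {..<c} = prob {\<omega>\<in>space M. Z \<omega> w < c}" for w c
    unfolding N_def by (rule distr_cdf(2)) (rule Zm)
  have AE1: "AE \<omega> in M. \<forall>w\<in>S. \<forall>m j.
      (\<lambda>T. (\<Sum>t\<in>{1..T}. if Zr t \<omega> w \<le> qnt (N w) m j then 1 else 0) / real T) \<longlonglongrightarrow> cdf (N w) (qnt (N w) m j) \<and>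
      (\<lambda>T. (\<Sum>t\<in>{1..T}. if Zr t \<omega> w < qnt (N w) m j then 1 else 0) / real T) \<longlonglongrightarrow> measure (N w) {..<qnt (N w) m j}"
  proof (rule AE_finite_allI[OF finS])
    fix w assume w: "w \<in> S"
    show "AE \<omega> in M. \<forall>m j.
      (\<lambda>T. (\<Sum>t\<in>{1..T}. if Zr t \<omega> w \<le> qnt (N w) m j then 1 else 0) / real T) \<longlonglongrightarrow> cdf (N w) (qnt (N w) m j) \<and>
      (\<lambda>T. (\<Sum>t\<in>{1..T}. if Zr t \<omega> w < qnt (N w) m j then 1 else 0) / real T) \<longlonglongrightarrow> measure (N w) {..<qnt (N w) m j}"
    proof (subst AE_all_countable, intro allI, subst AE_all_countable, intro allI AE_conjI)
      fix m j :: nat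
      define c where "c = qnt (N w) m j"
      have "AE \<omega> in M. (\<lambda>T. (\<Sum>t\<in>{1..T}. (\<lambda>v. if v w \<le> c then 1 else 0) (restrict (Zr t \<omega>) S)) / real T)
          \<longlonglongrightarrow> expectation (\<lambda>\<omega>. (\<lambda>v. if v w \<le> c then 1 else 0) (restrict (Z \<omega>) S))"
        by (rule slln_vec[OF indep Vm Wm dist]) (use w in auto)
      moreover have "expectation (\<lambda>\<omega>. (\<lambda>v. if v w \<le> c then 1 else 0) (restrict (Z \<omega>) S)) = cdf (N w) c"
        using w exp_ind_le[OF Zm[of w], of c] cdfN unfolding marg_cdf_def by simp
      ultimately show "AE \<omega> in M. (\<lambda>T. (\<Sum>t\<in>{1..T}. if Zr t \<omega> w \<le> qnt (N w) m j then 1 else 0) / real T) \<longlonglongrightarrow> cdf (N w) (qnt (N w) m j)"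
        using w unfolding c_def by simp
      have "AE \<omega> in M. (\<lambda>T. (\<Sum>t\<in>{1..T}. (\<lambda>v. if v w < c then 1 else 0) (restrict (Zr t \<omega>) S)) / real T)
          \<longlonglongrightarrow> expectation (\<lambda>\<omega>. (\<lambda>v. if v w < c then 1 else 0) (restrict (Z \<omega>) S))"
        by (rule slln_vec[OF indep Vm Wm dist]) (use w in auto)
      moreover have "expectation (\<lambda>\<omega>. (\<lambda>v. if v w < c then 1 else 0) (restrict (Z \<omega>) S)) = measure (N w) {..<c}"
        using w exp_ind_less[OF Zm[of w], of c] ltN by simp
      ultimately show "AE \<omega> in M. (\<lambda>T. (\<Sum>t\<in>{1..T}. if Zr t \<omega> w < qnt (N w) m j then 1 else 0) / real T) \<longlonglongrightarrow> measure (N w) {..<qnt (N w) m j}"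
        using w unfolding c_def by simp
    qed
  qed
  define h where "h v = \<bar>(MAX i\<in>X. marg_cdf M Z i (v i) powr \<alpha>) - (MAX j\<in>Y. marg_cdf M Z j (v j) powr \<beta>)\<bar>" for v :: "real^2 \<Rightarrow> real"
  have mcb: "0 \<le> marg_cdf M Z w c \<and> marg_cdf M Z w c \<le> 1" for w c
    unfolding marg_cdf_def by simp
  have mcp: "0 \<le> marg_cdf M Z w c powr a \<and> marg_cdf M Z w c powr a \<le> 1" if "a > 0" for w c a
    using mcb[of w c] that by (auto intro: powr_le1)
  have hb: "0 \<le> h v \<and> h v \<le> 1" for v
  proof -
    have "0 \<le> (MAX i\<in>X. marg_cdf M Z i (v i) powr \<alpha>) \<and> (MAX i\<in>X. marg_cdf M Z i (v i) powr \<alpha>) \<le> 1"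
      by (rule max01[OF assms(3,4)]) (use mcp assms(8) in auto)
    moreover have "0 \<le> (MAX i\<in>Y. marg_cdf M Z i (v i) powr \<beta>) \<and> (MAX i\<in>Y. marg_cdf M Z i (v i) powr \<beta>) \<le> 1"
      by (rule max01[OF assms(5,6)]) (use mcp assms(9) in auto)
    ultimately show ?thesis unfolding h_def by linarith
  qed
  have mcm[measurable]: "marg_cdf M Z w \<in> borel_measurable borel" for w
    by (rule borel_measurable_mono) (auto simp: mono_def marg_cdf_def intro!: finite_measure_mono)
  have hm: "h \<in> borel_measurable P"
  proof -
    have "(\<lambda>v. MAX i\<in>X. marg_cdf M Z i (v i) powr \<alpha>) \<in> borel_measurable P"
      using assms(3) by (intro borel_measurable_Max) (auto simp: S_def intro!: measurable_compose[OF comp mcm] powr_real_measurable)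
    moreover have "(\<lambda>v. MAX i\<in>Y. marg_cdf M Z i (v i) powr \<beta>) \<in> borel_measurable P"
      using assms(5) by (intro borel_measurable_Max) (auto simp: S_def intro!: measurable_compose[OF comp mcm] powr_real_measurable)
    ultimately show ?thesis unfolding h_def by measurable
  qed
  have AE2: "AE \<omega> in M. (\<lambda>T. (\<Sum>t\<in>{1..T}. h (restrict (Zr t \<omega>) S)) / real T) \<longlonglongrightarrow> expectation (\<lambda>\<omega>. h (restrict (Z \<omega>) S))"
    by (rule slln_vec[OF indep Vm Wm dist hm]) (use hb in auto)
  have hr: "h (restrict g S) = \<bar>(MAX i\<in>X. marg_cdf M Z i (g i) powr \<alpha>) - (MAX j\<in>Y. marg_cdf M Z j (g j) powr \<beta>)\<bar>" for g
    unfolding h_def using max_restrict[of X S "\<lambda>x i. marg_cdf M Z i x powr \<alpha>" g]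
      max_restrict[of Y S "\<lambda>x i. marg_cdf M Z i x powr \<beta>" g] by (simp add: S_def)
  show ?thesis
    using AE1 AE2
  proof (eventually_elim)
    case (elim \<omega>)
    note E1 = elim(1) and E2 = elim(2)[unfolded hr]
    show ?case
      unfolding madogram_est_def
    proof (rule final_det[OF assms(3-6,8,9)])
      show "0 \<le> emp_cdf Zr T w \<omega> u \<and> emp_cdf Zr T w \<omega> u \<le> 1" for w T u
      proof -
        have "(\<Sum>t\<in>{1..T}. if Zr t \<omega> w \<le> u then 1 else 0) \<le> (\<Sum>t\<in>{1..T}. (1::real))"
          by (intro sum_mono) auto
        then have "(\<Sum>t\<in>{1..T}. if Zr t \<omega> w \<le> u then 1 else 0) \<le> real T" by simp
        moreover have "0 \<le> (\<Sum>t\<in>{1..T}. if Zr t \<omega> w \<le> u then 1 else (0::real))"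
          by (intro sum_nonneg) auto
        ultimately show ?thesis unfolding emp_cdf_def
          by (cases "T = 0") (auto simp: field_simps)
      qed
      show "0 \<le> marg_cdf M Z w u \<and> marg_cdf M Z w u \<le> 1" for w u by (rule mcb)
      show "(\<lambda>T. (\<Sum>t\<in>{1..T}. \<bar>(MAX i\<in>X. marg_cdf M Z i (Zr t \<omega> i) powr \<alpha>) - (MAX j\<in>Y. marg_cdf M Z j (Zr t \<omega> j) powr \<beta>)\<bar>) / real T)
          \<longlonglongrightarrow> expectation (\<lambda>\<omega>. \<bar>(MAX i\<in>X. marg_cdf M Z i (Z \<omega> i) powr \<alpha>) - (MAX j\<in>Y. marg_cdf M Z j (Z \<omega> j) powr \<beta>)\<bar>)"
        using E2 .
      show "eventually (\<lambda>T. \<forall>u. \<bar>emp_cdf Zr T w \<omega> u - marg_cdf M Z w u\<bar> \<le> e) sequentially"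
        if w: "w \<in> X \<union> Y" and e: "e > 0" for w e
      proof -
        have wS: "w \<in> S" using w unfolding S_def .
        define Fh where "Fh T u = emp_cdf Zr T w \<omega> u" for T u
        define Gh where "Gh T u = (1 / real T) * (\<Sum>t\<in>{1..T}. if Zr t \<omega> w < u then 1 else (0::real))" for T u
        have "eventually (\<lambda>T. \<forall>u. \<bar>Fh T u - cdf (N w) u\<bar> \<le> e) sequentially"
        proof (rule gc_unif[OF Nrd _ _ _ _ _ e])
          show "Fh T x \<le> Fh T y" if "x \<le> y" for T x y
            unfolding Fh_def emp_cdf_def using that
            by (intro mult_left_mono sum_mono) auto
          show "0 \<le> Fh T x \<and> Fh T x \<le> 1" for T x
          proof -
            have "(\<Sum>t\<in>{1..T}. if Zr t \<omega> w \<le> x then 1 else 0) \<le> (\<Sum>t\<in>{1..T}. (1::real))"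
              by (intro sum_mono) auto
            then have "(\<Sum>t\<in>{1..T}. if Zr t \<omega> w \<le> x then 1 else 0) \<le> real T" by simp
            moreover have "0 \<le> (\<Sum>t\<in>{1..T}. if Zr t \<omega> w \<le> x then 1 else (0::real))"
              by (intro sum_nonneg) auto
            ultimately show ?thesis unfolding Fh_def emp_cdf_def
              by (cases "T = 0") (auto simp: field_simps)
          qed
          show "Fh T x \<le> Gh T y" if "x < y" for T x y
            unfolding Fh_def Gh_def emp_cdf_def using that
            by (intro mult_left_mono sum_mono) auto
          show "(\<lambda>T. Fh T (qnt (N w) m j)) \<longlonglongrightarrow> cdf (N w) (qnt (N w) m j)" for m j
            using E1 wS unfolding Fh_def emp_cdf_def by (simp add: mult.commute[of "1 / _"])
          show "(\<lambda>T. Gh T (qnt (N w) m j)) \<longlonglongrightarrow> measure (N w) {..<qnt (N w) m j}" for m j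
            using E1 wS unfolding Gh_def by (simp add: mult.commute[of "1 / _"])
        qed
        then show ?thesis unfolding Fh_def cdfN .
      qed
    qed
  qed
qed


end
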